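(* Let $d\in\mathbb{N}$ and $\varepsilon>0$. There is $k$ such that for every sequence of vectors $v_1,\dots,v_n\in\mathbb{Q}_{\ge0}^d$ there is a sequence $w_1,\dots,w_n\in\mathbb{Q}_{\ge0}^d$ such that for each coordinate $i=1,\dots,d$, $\sum_{j=1}^n|v_j^{(i)}-w_j^{(i)}|\le\varepsilon\sum_{j=1}^n v_j^{(i)}$, and such that up to rescaling there are at most $k$ distinct vectors among $w_1,\dots,w_n$ (i.e. there are $u_1,\dots,u_k$ such that every $w_j$ equals $\lambda u_\ell$ for some $\ell$ and some $\lambda\ge0$).
   Context: $v^{(i)}$ denotes the $i$-th coordinate of a vector $v$. *)

theory Defs
  imports "HOL-Analysis.Analysis"
begin

end

theory Submission
  imports Defs
begin

lemma floor_approx: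
  fixes x :: rat and B :: nat
  assumes "0 \<le> x" "x \<le> 1" "B > 0"
  shows "\<bar>x - of_nat (nat \<lfloor>x * of_nat B\<rfloor>) / of_nat B\<bar> \<le> x"
    and "\<bar>x - of_nat (nat \<lfloor>x * of_nat B\<rfloor>) / of_nat B\<bar> \<le> 1 / of_nat B"
    and "nat \<lfloor>x * of_nat B\<rfloor> \<le> B"
proof -
  have B: "(0::rat) < of_nat B" using assms by simp
  have f0: "0 \<le> \<lfloor>x * of_nat B\<rfloor>" using assms by simp
  have e: "of_nat (nat \<lfloor>x * of_nat B\<rfloor>) = (of_int \<lfloor>x * of_nat B\<rfloor> :: rat)"
    using f0 by (metis of_int_of_nat_eq of_nat_nat)
  have l: "of_int \<lfloor>x * of_nat B\<rfloor> \<le> x * of_nat B" by (rule of_int_floor_le)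
  have u: "x * of_nat B < of_int \<lfloor>x * of_nat B\<rfloor> + 1" using floor_correct[of "x * of_nat B"] by simp
  have f0': "(0::rat) \<le> of_int \<lfloor>x * of_nat B\<rfloor>" using f0 by simp
  have d1: "of_int \<lfloor>x * of_nat B\<rfloor> / of_nat B \<le> x" using l B by (simp add: divide_le_eq)
  have d2: "x - 1 / of_nat B < of_int \<lfloor>x * of_nat B\<rfloor> / of_nat B"
  proof -
    have "(x * of_nat B - 1) / of_nat B < of_int \<lfloor>x * of_nat B\<rfloor> / of_nat B"
      using u B by (intro divide_strict_right_mono) auto
    moreover have "(x * of_nat B - 1) / of_nat B = x - 1 / of_nat B" using B by (simp add: field_simps)
    ultimately show ?thesis by simp
  qed
  have d3: "0 \<le> of_int \<lfloor>x * of_nat B\<rfloor> / (of_nat B :: rat)" using f0' B by simp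
  show "\<bar>x - of_nat (nat \<lfloor>x * of_nat B\<rfloor>) / of_nat B\<bar> \<le> x"
    unfolding e using d1 d3 by linarith
  show "\<bar>x - of_nat (nat \<lfloor>x * of_nat B\<rfloor>) / of_nat B\<bar> \<le> 1 / of_nat B"
    unfolding e using d1 d2 by linarith
  have "x * of_nat B \<le> of_nat B" using assms B by (simp add: mult_le_cancel_right1)
  then have "\<lfloor>x * of_nat B\<rfloor> \<le> int B"
    by (metis floor_mono floor_of_nat)
  then show "nat \<lfloor>x * of_nat B\<rfloor> \<le> B" by simp
qed

lemma real_bound:
  fixes e X B \<epsilon> \<delta> :: real
  assumes "e \<le> X" "e \<le> B" "B \<le> \<epsilon>/2 * \<delta>" "0 \<le> X" "\<epsilon> > 0" "\<delta> > 0"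
  shows "e \<le> \<epsilon>/2 * X + \<delta>"
proof (cases "X \<ge> \<delta>")
  case True
  then have "\<epsilon>/2 * \<delta> \<le> \<epsilon>/2 * X" using assms by simp
  then show ?thesis using assms by linarith
next
  case False
  have "0 \<le> \<epsilon>/2 * X" using assms by simp
  then show ?thesis using False assms by linarith
qed

theorem lemma28:
  fixes d :: nat and \<epsilon> :: real
  assumes "\<epsilon> > 0"
  shows "\<exists>k::nat. \<forall>(n::nat) (v::nat \<Rightarrow> nat \<Rightarrow> rat).
           (\<forall>j<n. \<forall>i<d. v j i \<ge> 0) \<longrightarrow>
           (\<exists>w::nat \<Rightarrow> nat \<Rightarrow> rat.
              (\<forall>j<n. \<forall>i<d. w j i \<ge> 0) \<and>
              (\<forall>i<d. (\<Sum>j<n. real_of_rat \<bar>v j i - w j i\<bar>)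
                        \<le> \<epsilon> * (\<Sum>j<n. real_of_rat (v j i))) \<and>
              (\<exists>u::nat \<Rightarrow> nat \<Rightarrow> real.
                 \<forall>j<n. \<exists>l<k. \<exists>c::real. c \<ge> 0 \<and>
                    (\<forall>i<d. real_of_rat (w j i) = c * u l i)))"
proof -
  define \<delta> where "\<delta> = \<epsilon> / (2 * (real d + 1))"
  have \<delta>0: "\<delta> > 0" using assms by (simp add: \<delta>_def)
  have \<delta>d: "\<delta> * real d \<le> \<epsilon> / 2" using assms
    by (simp add: \<delta>_def field_simps)
  obtain N :: nat where N: "1 / (\<epsilon>/2 * \<delta>) < real N" using reals_Archimedean2 by blast
  define B where "B = Suc N"
  have B0: "B > 0" by (simp add: B_def)
  have hB: "1 / real B \<le> \<epsilon>/2 * \<delta>"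
  proof -
    have p: "\<epsilon>/2 * \<delta> > 0" using assms \<delta>0 by simp
    have "1 / (\<epsilon>/2 * \<delta>) < real B" using N by (simp add: B_def)
    then show ?thesis using p B0 by (simp add: field_simps)
  qed
  define F where "F = PiE {..<d} (\<lambda>_. {0..B})"
  have "finite F" by (simp add: F_def finite_PiE)
  then obtain g where g: "bij_betw g {0..<card F} F" using ex_bij_betw_nat_finite by blast
  show ?thesis
  proof (intro exI[of _ "card F"] allI impI)
    fix n and v :: "nat \<Rightarrow> nat \<Rightarrow> rat"
    assume nonneg: "\<forall>j<n. \<forall>i<d. 0 \<le> v j i"
    define S where "S i = (\<Sum>j<n. v j i)" for i
    define y where "y j i = v j i / S i" for j i
    define T where "T j = (\<Sum>i<d. y j i)" for j
    define x where "x j i = y j i / T j" for j i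
    define t where "t j i = nat \<lfloor>x j i * of_nat B\<rfloor>" for j i
    define w where "w j i = S i * T j * of_nat (t j i) / of_nat B" for j i
    have S0: "S i \<ge> 0" if "i < d" for i using nonneg that by (auto simp: S_def intro: sum_nonneg)
    have y0: "y j i \<ge> 0" if "j < n" "i < d" for j i
      using nonneg that S0[OF that(2)] by (simp add: y_def)
    have T0: "T j \<ge> 0" if "j < n" for j using y0 that by (auto simp: T_def intro: sum_nonneg)
    have x0: "x j i \<ge> 0" if "j < n" "i < d" for j i
      using y0[OF that] T0[OF that(1)] by (simp add: x_def)
    have x1: "x j i \<le> 1" if "j < n" "i < d" for j i
    proof -
      have "y j i \<le> T j" unfolding T_def
        by (rule member_le_sum) (use y0 that in auto)
      then show ?thesis using y0[OF that] T0[OF that(1)]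
        by (cases "T j = 0") (auto simp: x_def divide_le_eq)
    qed
    have vx: "v j i = S i * T j * x j i" if "j < n" "i < d" for j i
    proof (cases "S i = 0")
      case True
      have "\<forall>j'\<in>{..<n}. v j' i = 0"
        using True nonneg that by (subst sum_nonneg_eq_0_iff[symmetric]) (auto simp: S_def)
      then show ?thesis using True that by simp
    next
      case False
      show ?thesis
      proof (cases "T j = 0")
        case True
        have "\<forall>i'\<in>{..<d}. y j i' = 0"
          using True y0 that by (subst sum_nonneg_eq_0_iff[symmetric]) (auto simp: T_def)
        then have "y j i = 0" using that by auto
        then show ?thesis using False by (simp add: y_def x_def)
      next
        case False2: False
        show ?thesis using False False2 by (simp add: x_def y_def)
      qed
    qed
    have sumT: "(\<Sum>j<n. T j) \<le> of_nat d"
    proof -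
      have "(\<Sum>j<n. T j) = (\<Sum>i<d. \<Sum>j<n. y j i)" unfolding T_def by (rule sum.swap)
      also have "\<dots> = (\<Sum>i<d. S i / S i)"
        unfolding y_def S_def by (simp only: sum_divide_distrib[symmetric])
      also have "\<dots> \<le> (\<Sum>i<d. 1)" by (rule sum_mono) simp
      finally show ?thesis by simp
    qed
    show "\<exists>w::nat \<Rightarrow> nat \<Rightarrow> rat.
              (\<forall>j<n. \<forall>i<d. w j i \<ge> 0) \<and>
              (\<forall>i<d. (\<Sum>j<n. real_of_rat \<bar>v j i - w j i\<bar>)
                        \<le> \<epsilon> * (\<Sum>j<n. real_of_rat (v j i))) \<and>
              (\<exists>u::nat \<Rightarrow> nat \<Rightarrow> real.
                 \<forall>j<n. \<exists>l<card F. \<exists>c::real. c \<ge> 0 \<and>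
                    (\<forall>i<d. real_of_rat (w j i) = c * u l i))"
    proof (intro exI[of _ w] conjI allI impI)
      fix j i assume "j < n" "i < d"
      then show "0 \<le> w j i" using S0 T0 B0 by (simp add: w_def)
    next
      fix i assume i: "i < d"
      have tm: "real_of_rat \<bar>v j i - w j i\<bar>
          \<le> \<epsilon>/2 * real_of_rat (v j i) + \<delta> * (real_of_rat (S i) * real_of_rat (T j))"
        if j: "j < n" for j
      proof -
        let ?e = "\<bar>x j i - of_nat (t j i) / of_nat B\<bar>"
        have diff: "v j i - w j i = S i * T j * (x j i - of_nat (t j i) / of_nat B)"
          using vx[OF j i] by (simp add: w_def algebra_simps)
        have ST: "0 \<le> S i * T j" using S0[OF i] T0[OF j] by simp
        have a: "\<bar>v j i - w j i\<bar> = S i * T j * ?e"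
          using diff S0[OF i] T0[OF j] by (simp add: abs_mult)
        have e1: "real_of_rat ?e \<le> real_of_rat (x j i)"
          unfolding of_rat_less_eq t_def by (rule floor_approx(1)[OF x0[OF j i] x1[OF j i] B0])
        have e2': "?e \<le> 1 / of_nat B"
          unfolding t_def by (rule floor_approx(2)[OF x0[OF j i] x1[OF j i] B0])
        have e2: "real_of_rat ?e \<le> 1 / real B"
          using e2' by (metis of_rat_less_eq of_rat_divide of_rat_1 of_rat_of_nat_eq)
        have x0r: "0 \<le> real_of_rat (x j i)" using x0[OF j i] by simp
        have eb: "real_of_rat ?e \<le> \<epsilon>/2 * real_of_rat (x j i) + \<delta>"
          by (rule real_bound[OF e1 e2 hB x0r assms \<delta>0])
        have STr: "0 \<le> real_of_rat (S i) * real_of_rat (T j)" using ST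
          by (metis of_rat_mult zero_le_of_rat_iff)
        have "real_of_rat \<bar>v j i - w j i\<bar> = real_of_rat (S i) * real_of_rat (T j) * real_of_rat ?e"
          unfolding a by (simp add: of_rat_mult)
        also have "\<dots> \<le> real_of_rat (S i) * real_of_rat (T j) * (\<epsilon>/2 * real_of_rat (x j i) + \<delta>)"
          by (rule mult_left_mono[OF eb STr])
        also have "\<dots> = \<epsilon>/2 * real_of_rat (v j i) + \<delta> * (real_of_rat (S i) * real_of_rat (T j))"
          using vx[OF j i] by (simp add: of_rat_mult algebra_simps)
        finally show ?thesis .
      qed
      have "(\<Sum>j<n. real_of_rat \<bar>v j i - w j i\<bar>)
          \<le> (\<Sum>j<n. \<epsilon>/2 * real_of_rat (v j i) + \<delta> * (real_of_rat (S i) * real_of_rat (T j)))"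
        by (rule sum_mono) (use tm in auto)
      also have "\<dots> = \<epsilon>/2 * real_of_rat (S i) + \<delta> * real_of_rat (S i) * real_of_rat (\<Sum>j<n. T j)"
      proof -
        have Sr: "real_of_rat (S i) = (\<Sum>j<n. real_of_rat (v j i))" by (simp add: S_def of_rat_sum)
        have a1: "(\<Sum>j<n. \<epsilon>/2 * real_of_rat (v j i)) = \<epsilon>/2 * real_of_rat (S i)"
          by (simp add: Sr sum_distrib_left)
        have a2: "(\<Sum>j<n. \<delta> * (real_of_rat (S i) * real_of_rat (T j)))
             = \<delta> * real_of_rat (S i) * real_of_rat (\<Sum>j<n. T j)"
          by (simp add: of_rat_sum sum_distrib_left mult.assoc)
        show ?thesis unfolding sum.distrib a1 a2 ..
      qed
      also have "\<dots> \<le> \<epsilon>/2 * real_of_rat (S i) + \<delta> * real_of_rat (S i) * real d"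
      proof -
        have "real_of_rat (\<Sum>j<n. T j) \<le> real d" using sumT
          by (metis of_rat_less_eq of_rat_of_nat_eq)
        moreover have "0 \<le> \<delta> * real_of_rat (S i)" using \<delta>0 S0[OF i] by simp
        ultimately show ?thesis by (simp add: mult_left_mono)
      qed
      also have "\<dots> \<le> \<epsilon> * real_of_rat (S i)"
      proof -
        have "\<delta> * real_of_rat (S i) * real d = (\<delta> * real d) * real_of_rat (S i)" by simp
        also have "\<dots> \<le> \<epsilon>/2 * real_of_rat (S i)"
          by (rule mult_right_mono[OF \<delta>d]) (use S0[OF i] in simp)
        finally show ?thesis by simp
      qed
      also have "\<dots> = \<epsilon> * (\<Sum>j<n. real_of_rat (v j i))" by (simp add: S_def of_rat_sum)
      finally show "(\<Sum>j<n. real_of_rat \<bar>v j i - w j i\<bar>) \<le> \<epsilon> * (\<Sum>j<n. real_of_rat (v j i))" .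
    next
      define u where "u l i = real_of_rat (S i) * real (g l i) / real B" for l i
      show "\<exists>u::nat \<Rightarrow> nat \<Rightarrow> real.
                 \<forall>j<n. \<exists>l<card F. \<exists>c::real. c \<ge> 0 \<and>
                    (\<forall>i<d. real_of_rat (w j i) = c * u l i)"
      proof (intro exI[of _ u] allI impI)
        fix j assume j: "j < n"
        have "restrict (t j) {..<d} \<in> F"
          using floor_approx(3)[OF x0[OF j] x1[OF j] B0] by (auto simp: F_def t_def)
        then obtain l where l: "l < card F" "g l = restrict (t j) {..<d}"
          using g unfolding bij_betw_def by (metis atLeastLessThan_iff imageE)
        show "\<exists>l<card F. \<exists>c::real. c \<ge> 0 \<and> (\<forall>i<d. real_of_rat (w j i) = c * u l i)"
        proof (intro exI[of _ l] conjI exI[of _ "real_of_rat (T j)"] allI impI)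
          show "l < card F" by (rule l(1))
          show "0 \<le> real_of_rat (T j)" using T0[OF j] by simp
          fix i assume i: "i < d"
          show "real_of_rat (w j i) = real_of_rat (T j) * u l i"
            using i l(2) by (simp add: u_def w_def of_rat_mult of_rat_divide)
        qed
      qed
    qed
  qed
qed

end
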